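(* Let $G$ be a $2$-connected planar graph embedded in the plane (so every face boundary is a cycle), and let $(G,H,r,c)$ be a multiflow instance. Let $s_1t_1$ and $s_2t_2$ be two demand edges of $H$ whose four distinct endpoints lie on the boundary of the same face of $G$ and appear around that face boundary in the cyclic order $s_1,s_2,t_1,t_2$. Let $m=\min\{r(s_1t_1),r(s_2t_2)\}$ and define $r'$ on pairs of vertices by $r'(s_1t_1)=r(s_1t_1)-m$, $r'(s_2t_2)=r(s_2t_2)-m$, $r'(s_1s_2)=r(s_1s_2)+m$, $r'(t_1t_2)=r(t_1t_2)+m$, and $r'(uv)=r(uv)$ for every other pair (where $r(uv)=0$ if $uv\notin E(H)$); let $H'=\{uv : r'(uv)>0\}$. If $(G,H,r,c)$ satisfies the cut condition, then so does $(G,H',r',c)$.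
   Context: A multiflow instance $(G,H,r,c)$ consists of a supply graph $G$, a demand graph $H$ on $V(G)$, nonnegative capacities $c$ on $E(G)$ and positive requests $r$ on $E(H)$. It satisfies the cut condition if for every $X\subseteq V(G)$, $\sum_{e\in\delta_G(X)} c(e)\ge \sum_{h\in\delta_H(X)} r(h)$. *)

theory Defs
  imports "HOL-Analysis.Analysis"
begin

text \<open>A supply graph: vertex set V, edge set E (abstract edges, parallel edges allowed),
  and an incidence function ends assigning to each edge its two distinct endpoints.\<close>

definition graph :: "'a set \<Rightarrow> 'e set \<Rightarrow> ('e \<Rightarrow> 'a set) \<Rightarrow> bool" where
  "graph V E ends \<longleftrightarrow> finite V \<and> finite E \<and>
     (\<forall>e\<in>E. ends e \<subseteq> V \<and> card (ends e) = 2)"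

inductive reach :: "'a set \<Rightarrow> 'e set \<Rightarrow> ('e \<Rightarrow> 'a set) \<Rightarrow> 'a \<Rightarrow> 'a \<Rightarrow> bool"
  for W E ends where
  refl: "u \<in> W \<Longrightarrow> reach W E ends u u"
| step: "reach W E ends u v \<Longrightarrow> e \<in> E \<Longrightarrow> ends e = {v, w} \<Longrightarrow> ends e \<subseteq> W
          \<Longrightarrow> reach W E ends u w"

definition connected_on :: "'a set \<Rightarrow> 'e set \<Rightarrow> ('e \<Rightarrow> 'a set) \<Rightarrow> bool" where
  "connected_on W E ends \<longleftrightarrow> W \<noteq> {} \<and> (\<forall>u\<in>W. \<forall>v\<in>W. reach W E ends u v)"

definition two_connected :: "'a set \<Rightarrow> 'e set \<Rightarrow> ('e \<Rightarrow> 'a set) \<Rightarrow> bool" where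
  "two_connected V E ends \<longleftrightarrow> card V \<ge> 3 \<and> connected_on V E ends \<and>
     (\<forall>x\<in>V. connected_on (V - {x}) E ends)"

definition plane_embedding ::
  "'a set \<Rightarrow> 'e set \<Rightarrow> ('e \<Rightarrow> 'a set) \<Rightarrow> ('a \<Rightarrow> complex) \<Rightarrow> ('e \<Rightarrow> real \<Rightarrow> complex) \<Rightarrow> bool" where
  "plane_embedding V E ends p gam \<longleftrightarrow>
     inj_on p V \<and>
     (\<forall>e\<in>E. arc (gam e) \<and>
        (\<exists>u v. ends e = {u, v} \<and> pathstart (gam e) = p u \<and> pathfinish (gam e) = p v) \<and>
        path_image (gam e) \<inter> p ` V \<subseteq> p ` ends e) \<and>
     (\<forall>e\<in>E. \<forall>f\<in>E. e \<noteq> f \<longrightarrow> path_image (gam e) \<inter> path_image (gam f) \<subseteq> p ` (ends e \<inter> ends f))"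

definition drawing ::
  "'a set \<Rightarrow> 'e set \<Rightarrow> ('a \<Rightarrow> complex) \<Rightarrow> ('e \<Rightarrow> real \<Rightarrow> complex) \<Rightarrow> complex set" where
  "drawing V E p gam = p ` V \<union> (\<Union>e\<in>E. path_image (gam e))"

definition faces ::
  "'a set \<Rightarrow> 'e set \<Rightarrow> ('a \<Rightarrow> complex) \<Rightarrow> ('e \<Rightarrow> real \<Rightarrow> complex) \<Rightarrow> complex set set" where
  "faces V E p gam = components (- drawing V E p gam)"

definition is_cycle :: "'a set \<Rightarrow> 'e set \<Rightarrow> ('e \<Rightarrow> 'a set) \<Rightarrow> 'a list \<Rightarrow> 'e list \<Rightarrow> bool" where
  "is_cycle V E ends vs es \<longleftrightarrow>
     length vs \<ge> 3 \<and> length es = length vs \<and> distinct vs \<and> distinct es \<and>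
     set vs \<subseteq> V \<and> set es \<subseteq> E \<and>
     (\<forall>i < length vs. ends (es ! i) = {vs ! i, vs ! ((i + 1) mod length vs)})"

definition face_boundary_cycle ::
  "('e \<Rightarrow> real \<Rightarrow> complex) \<Rightarrow> complex set \<Rightarrow> 'e list \<Rightarrow> bool" where
  "face_boundary_cycle gam F es \<longleftrightarrow> frontier F = (\<Union>e\<in>set es. path_image (gam e))"

definition cyclic_order4 :: "'a list \<Rightarrow> 'a \<Rightarrow> 'a \<Rightarrow> 'a \<Rightarrow> 'a \<Rightarrow> bool" where
  "cyclic_order4 vs a b c d \<longleftrightarrow>
     (\<exists>n i j k l. i < j \<and> j < k \<and> k < l \<and> l < length vs \<and>
        rotate n vs ! i = a \<and> rotate n vs ! j = b \<and> rotate n vs ! k = c \<and> rotate n vs ! l = d)"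

definition multiflow_instance ::
  "'a set \<Rightarrow> 'e set \<Rightarrow> ('e \<Rightarrow> 'a set) \<Rightarrow> 'a set set \<Rightarrow> ('a set \<Rightarrow> real) \<Rightarrow> ('e \<Rightarrow> real) \<Rightarrow> bool" where
  "multiflow_instance V E ends H r c \<longleftrightarrow>
     graph V E ends \<and>
     (\<forall>h\<in>H. \<exists>u v. u \<in> V \<and> v \<in> V \<and> u \<noteq> v \<and> h = {u, v}) \<and>
     (\<forall>e\<in>E. c e \<ge> 0) \<and> (\<forall>h\<in>H. r h > 0)"

definition delta_G :: "'e set \<Rightarrow> ('e \<Rightarrow> 'a set) \<Rightarrow> 'a set \<Rightarrow> 'e set" where
  "delta_G E ends X = {e \<in> E. card (ends e \<inter> X) = 1}"

definition delta_H :: "'a set set \<Rightarrow> 'a set \<Rightarrow> 'a set set" where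
  "delta_H H X = {h \<in> H. card (h \<inter> X) = 1}"

definition cut_condition ::
  "'a set \<Rightarrow> 'e set \<Rightarrow> ('e \<Rightarrow> 'a set) \<Rightarrow> 'a set set \<Rightarrow> ('a set \<Rightarrow> real) \<Rightarrow> ('e \<Rightarrow> real) \<Rightarrow> bool" where
  "cut_condition V E ends H r c \<longleftrightarrow>
     (\<forall>X. X \<subseteq> V \<longrightarrow> (\<Sum>e\<in>delta_G E ends X. c e) \<ge> (\<Sum>h\<in>delta_H H X. r h))"

definition ext_req :: "'a set set \<Rightarrow> ('a set \<Rightarrow> real) \<Rightarrow> 'a set \<Rightarrow> real" where
  "ext_req H r uv = (if uv \<in> H then r uv else 0)"

definition swap_req :: "'a set set \<Rightarrow> ('a set \<Rightarrow> real) \<Rightarrow> 'a \<Rightarrow> 'a \<Rightarrow> 'a \<Rightarrow> 'a \<Rightarrow> 'a set \<Rightarrow> real" where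
  "swap_req H r s1 t1 s2 t2 uv =
     (let m = min (r {s1, t1}) (r {s2, t2}) in
      if uv = {s1, t1} then ext_req H r uv - m
      else if uv = {s2, t2} then ext_req H r uv - m
      else if uv = {s1, s2} then ext_req H r uv + m
      else if uv = {t1, t2} then ext_req H r uv + m
      else ext_req H r uv)"

definition pos_pairs :: "'a set \<Rightarrow> ('a set \<Rightarrow> real) \<Rightarrow> 'a set set" where
  "pos_pairs V r' = {uv. (\<exists>u v. u \<in> V \<and> v \<in> V \<and> u \<noteq> v \<and> uv = {u, v}) \<and> r' uv > 0}"

end

theory Submission
  imports Defs
begin


lemma topo_key:
  fixes u d F :: "complex set" and g1 g2 :: "real \<Rightarrow> complex"
  assumes cu: "compact u" and cd: "compact d"
    and ud: "u \<inter> d \<subseteq> path_image g1"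
    and fr: "frontier F = u \<union> d" and conF: "connected F" and neF: "F \<noteq> {}"
    and Fud: "F \<inter> (u \<union> d) = {}"
    and F1: "F \<inter> path_image g1 = {}" and F2: "F \<inter> path_image g2 = {}"
    and p1: "path g1" and p2: "path g2"
    and d12: "path_image g1 \<inter> path_image g2 = {}"
    and s2: "pathstart g2 \<in> u" and f2: "pathfinish g2 \<in> d"
  shows False
proof -
  let ?P1 = "path_image g1" let ?P2 = "path_image g2"
  have cont: "continuous_on {0..1} g2" using p2 by (simp add: path_def)
  define Tu where "Tu = {0..1} \<inter> g2 -` u"
  have "closed Tu" unfolding Tu_def
    by (rule continuous_closed_preimage[OF cont]) (auto simp: cu compact_imp_closed)
  hence "compact Tu" unfolding Tu_def by (simp add: Tu_def bounded_Int compact_eq_bounded_closed)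
  moreover have "0 \<in> Tu" using s2 by (simp add: Tu_def pathstart_def)
  ultimately obtain t0 where t0: "t0 \<in> Tu" "\<And>t. t \<in> Tu \<Longrightarrow> t \<le> t0"
    using compact_attains_sup[of Tu] by blast
  have t01: "0 \<le> t0" "t0 \<le> 1" "g2 t0 \<in> u" using t0(1) by (auto simp: Tu_def)
  define Td where "Td = {t0..1} \<inter> g2 -` d"
  have contd: "continuous_on {t0..1} g2" by (rule continuous_on_subset[OF cont]) (use t01 in auto)
  have "closed Td" unfolding Td_def
    by (rule continuous_closed_preimage[OF contd]) (auto simp: cd compact_imp_closed)
  hence "compact Td" unfolding Td_def by (simp add: Td_def bounded_Int compact_eq_bounded_closed)
  moreover have "1 \<in> Td" using f2 t01 by (simp add: Td_def pathfinish_def)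
  ultimately obtain t1 where t1: "t1 \<in> Td" "\<And>t. t \<in> Td \<Longrightarrow> t1 \<le> t"
    using compact_attains_inf[of Td] by blast
  have t11: "t0 \<le> t1" "t1 \<le> 1" "g2 t1 \<in> d" using t1(1) by (auto simp: Td_def)
  have inP2: "\<And>t. 0 \<le> t \<Longrightarrow> t \<le> 1 \<Longrightarrow> g2 t \<in> ?P2" by (auto simp: path_image_def)
  have "g2 t0 \<notin> d"
  proof
    assume "g2 t0 \<in> d" with t01 have "g2 t0 \<in> ?P1" using ud by auto
    with inP2[of t0] t01 d12 show False by auto
  qed
  hence lt: "t0 < t1" using t11 by (metis order_le_less)
  have y2u: "g2 t1 \<notin> u"
  proof
    assume "g2 t1 \<in> u" with t11 have "g2 t1 \<in> ?P1" using ud by auto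
    with inP2[of t1] t01 t11 d12 show False by auto
  qed
  have x2d: "g2 t0 \<notin> d"  by fact
  define S2 where "S2 = g2 ` {t0<..<t1}"
  have S2sub: "S2 \<subseteq> ?P2" unfolding S2_def using t01 t11 by (auto intro!: inP2)
  have S2u: "S2 \<inter> u = {}"
  proof -
    { fix t assume "t0 < t" "t < t1" "g2 t \<in> u"
      hence "t \<in> Tu" using t01 t11 by (auto simp: Tu_def)
      hence False using t0(2) \<open>t0 < t\<close> by fastforce }
    thus ?thesis unfolding S2_def by auto
  qed
  have S2d: "S2 \<inter> d = {}"
  proof -
    { fix t assume "t0 < t" "t < t1" "g2 t \<in> d"
      hence "t \<in> Td" using t01 t11 by (auto simp: Td_def)
      hence False using t1(2) \<open>t < t1\<close> by fastforce }
    thus ?thesis unfolding S2_def by auto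
  qed
  have S2_1: "S2 \<inter> ?P1 = {}" using S2sub d12 by auto
  have S2F: "S2 \<inter> F = {}" using S2sub F2 by auto
  have contS: "continuous_on {t0..t1} g2" by (rule continuous_on_subset[OF cont]) (use t01 t11 in auto)
  have conS2: "connected S2" unfolding S2_def
    by (rule connected_continuous_image) (auto intro: continuous_on_subset[OF contS])
  have clS2: "g2 ` {t0..t1} \<subseteq> closure S2"
  proof -
    have "g2 ` closure {t0<..<t1} \<subseteq> closure S2"
      by (rule image_closure_subset) (use contS lt in \<open>auto simp: S2_def intro: closure_subset[THEN subsetD]\<close>)
    thus ?thesis using lt by simp
  qed
  have x2cl: "g2 t0 \<in> closure S2" "g2 t1 \<in> closure S2" using clS2 lt by auto
  obtain w where w: "w \<in> F" using neF by auto
  obtain q where q: "q \<in> S2" using lt unfolding S2_def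
    by (metis dense greaterThanLessThan_iff image_eqI)
  have clF: "u \<union> d \<subseteq> closure F" using fr frontier_def by (metis Diff_subset)
  have nosep: "\<not> connected_component (- (u \<union> d)) w q"
  proof
    assume "connected_component (- (u \<union> d)) w q"
    then obtain Z where Z: "connected Z" "Z \<subseteq> - (u \<union> d)" "w \<in> Z" "q \<in> Z"
      by (auto simp: connected_component_def)
    have "Z \<inter> frontier F \<noteq> {}"
      by (rule connected_Int_frontier) (use Z w q S2F in auto)
    thus False using Z fr by auto
  qed
  have joinc: "connected_component (- (K \<union> ?P1)) w q"
    if cK: "compact K" and yK: "y \<notin> K" and yP: "y \<notin> ?P1" and yF: "y \<in> closure F"
      and yS: "y \<in> closure S2" and KF: "F \<inter> K = {}" and KS: "S2 \<inter> K = {}" for K y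
  proof -
    have "closed (K \<union> ?P1)" using cK p1 by (simp add: compact_imp_closed compact_path_image closed_Un)
    hence "open (- (K \<union> ?P1))" by (rule open_Compl)
    then obtain e where e: "e > 0" "ball y e \<subseteq> - (K \<union> ?P1)"
      using yK yP open_contains_ball by blast
    have "ball y e \<inter> F \<noteq> {}" using open_Int_closure_eq_empty[of "ball y e" F] yF e centre_in_ball[of y e] by blast
    moreover have "ball y e \<inter> S2 \<noteq> {}" using open_Int_closure_eq_empty[of "ball y e" S2] yS e centre_in_ball[of y e] by blast
    ultimately have "connected (F \<union> ball y e \<union> S2)"
      using conF conS2 by (intro connected_Un) auto
    moreover have "F \<union> ball y e \<union> S2 \<subseteq> - (K \<union> ?P1)" using e KF KS F1 S2_1 by auto
    ultimately show ?thesis using w q by (auto simp: connected_component_def)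
  qed
  have c1: "connected_component (- (u \<union> ?P1)) w q"
    by (rule joinc[of u "g2 t1"]) (use cu y2u inP2 t01 t11 d12 clF x2cl Fud S2u in auto)
  have c2: "connected_component (- (d \<union> ?P1)) w q"
    by (rule joinc[of d "g2 t0"]) (use cd x2d inP2 t01 t11 d12 clF x2cl Fud S2d in auto)
  have "(u \<union> ?P1) \<inter> (d \<union> ?P1) = ?P1" using ud by auto
  hence "connected ((u \<union> ?P1) \<inter> (d \<union> ?P1))" using p1 by (simp add: connected_path_image)
  hence "connected_component (- ((u \<union> ?P1) \<union> (d \<union> ?P1))) w q"
    using Janiszewski[of "u \<union> ?P1" "d \<union> ?P1" w q] c1 c2 cu cd p1
    by (auto simp: compact_Un compact_path_image compact_imp_closed closed_Un)
  hence "connected_component (- (u \<union> d)) w q"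
    by (rule connected_component_of_subset) auto
  with nosep show False by blast
qed



definition Dr :: "'a set \<Rightarrow> 'e set \<Rightarrow> ('e \<Rightarrow> 'a set) \<Rightarrow> ('a \<Rightarrow> complex) \<Rightarrow> ('e \<Rightarrow> real \<Rightarrow> complex) \<Rightarrow> complex set" where
  "Dr W E ends p gam = p ` W \<union> (\<Union>e\<in>{e\<in>E. ends e \<subseteq> W}. path_image (gam e))"

lemma ends_two: assumes "graph V E ends" "e \<in> E" shows "\<exists>x y. x \<noteq> y \<and> ends e = {x,y}"
  using assms unfolding graph_def card_2_iff by blast

lemma emb_e:
  assumes "plane_embedding V E ends p gam" "e \<in> E"
  shows "arc (gam e)" "\<exists>u v. ends e = {u, v} \<and> pathstart (gam e) = p u \<and> pathfinish (gam e) = p v"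
    "path_image (gam e) \<inter> p ` V \<subseteq> p ` ends e"
  using assms(1)[unfolded plane_embedding_def, THEN conjunct2, THEN conjunct1, rule_format, OF assms(2)]
  by auto

lemma emb_cross:
  assumes "plane_embedding V E ends p gam" "e \<in> E" "f \<in> E" "e \<noteq> f"
  shows "path_image (gam e) \<inter> path_image (gam f) \<subseteq> p ` (ends e \<inter> ends f)"
  using assms(1)[unfolded plane_embedding_def, THEN conjunct2, THEN conjunct2, rule_format, OF assms(2,3,4)] .

lemma emb_inj: "plane_embedding V E ends p gam \<Longrightarrow> inj_on p V"
  by (simp add: plane_embedding_def)

lemma ends_img:
  assumes emb: "plane_embedding V E ends p gam" and e: "e \<in> E"
  shows "p ` ends e \<subseteq> path_image (gam e)" "path (gam e)"
proof -
  from emb_e[OF emb e] obtain x y where "arc (gam e)" "ends e = {x,y}" "pathstart (gam e) = p x" "pathfinish (gam e) = p y"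
    by blast
  moreover have "p x \<in> path_image (gam e)" "p y \<in> path_image (gam e)"
    by (metis calculation(3) pathstart_in_path_image, metis calculation(4) pathfinish_in_path_image)
  ultimately show "p ` ends e \<subseteq> path_image (gam e)" "path (gam e)"
    by (auto simp: arc_imp_path)
qed

lemma reach_path:
  assumes emb: "plane_embedding V E ends p gam" and gr: "graph V E ends"
    and r: "reach W E ends a b"
  shows "\<exists>g. path g \<and> pathstart g = p a \<and> pathfinish g = p b \<and> path_image g \<subseteq> Dr W E ends p gam"
  using r
proof induction
  case (refl u)
  show ?case by (rule exI[of _ "\<lambda>t. p u"]) (use refl in \<open>auto simp: Dr_def path_def pathstart_def pathfinish_def path_image_def\<close>)
next
  case (step u v e w)
  then obtain g where g: "path g" "pathstart g = p u" "pathfinish g = p v" "path_image g \<subseteq> Dr W E ends p gam"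
    by blast
  from emb_e[OF emb step.hyps(2)] obtain x y where xy: "arc (gam e)" "ends e = {x,y}" "pathstart (gam e) = p x" "pathfinish (gam e) = p y"
    by blast
  have vw: "v \<noteq> w" using gr step.hyps(2,3) unfolding graph_def by auto
  have sub: "path_image (gam e) \<subseteq> Dr W E ends p gam" using step.hyps(2,4) by (auto simp: Dr_def)
  from xy(2) step.hyps(3) vw have "(x = v \<and> y = w) \<or> (x = w \<and> y = v)" by (auto simp: doubleton_eq_iff)
  have pe: "path (gam e)" using xy arc_imp_path by blast
  show ?case
  proof (cases "x = v")
    case True
    hence h: "x = v" "y = w" using \<open>(x = v \<and> y = w) \<or> (x = w \<and> y = v)\<close> vw by auto
    have j: "pathfinish g = pathstart (gam e)" using g xy h by simp
    show ?thesis
    proof (intro exI conjI)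
      show "path (g +++ gam e)" using g pe j by simp
      show "pathstart (g +++ gam e) = p u" using g by simp
      show "pathfinish (g +++ gam e) = p w" using xy h by simp
      show "path_image (g +++ gam e) \<subseteq> Dr W E ends p gam" using g sub j by (simp add: path_image_join)
    qed
  next
    case False
    hence h: "x = w" "y = v" using \<open>(x = v \<and> y = w) \<or> (x = w \<and> y = v)\<close> vw by auto
    have j: "pathfinish g = pathstart (reversepath (gam e))" using g xy h by simp
    show ?thesis
    proof (intro exI conjI)
      show "path (g +++ reversepath (gam e))" using g pe j by simp
      show "pathstart (g +++ reversepath (gam e)) = p u" using g by simp
      show "pathfinish (g +++ reversepath (gam e)) = p w" using xy h by simp
      show "path_image (g +++ reversepath (gam e)) \<subseteq> Dr W E ends p gam" using g sub j by (simp add: path_image_join)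
    qed
  qed
qed

lemma Dr_disj:
  assumes emb: "plane_embedding V E ends p gam" and gr: "graph V E ends"
    and W: "W1 \<subseteq> V" "W2 \<subseteq> V" "W1 \<inter> W2 = {}"
  shows "Dr W1 E ends p gam \<inter> Dr W2 E ends p gam = {}"
proof -
  have inj: "inj_on p V" using emb by (rule emb_inj)
  have vv: "p a \<noteq> p b" if "a \<in> W1" "b \<in> W2" for a b
    using inj that W by (metis disjoint_iff inj_on_contraD subsetD)
  have ve: "p a \<notin> path_image (gam f)" if "a \<in> W1" "f \<in> E" "ends f \<subseteq> W2" for a f
  proof
    assume "p a \<in> path_image (gam f)"
    with emb_e(3)[OF emb that(2)] that W have "p a \<in> p ` ends f" by blast
    then obtain c where "c \<in> ends f" "p a = p c" by auto
    thus False using vv[of a c] that W by auto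
  qed
  have ve2: "p a \<notin> path_image (gam f)" if "a \<in> W2" "f \<in> E" "ends f \<subseteq> W1" for a f
  proof
    assume "p a \<in> path_image (gam f)"
    with emb_e(3)[OF emb that(2)] that W have "p a \<in> p ` ends f" by blast
    then obtain c where "c \<in> ends f" "p a = p c" by auto
    thus False using vv[of c a] that W by auto
  qed
  have ee: "path_image (gam e) \<inter> path_image (gam f) = {}"
    if eE: "e \<in> E" "ends e \<subseteq> W1" "f \<in> E" "ends f \<subseteq> W2" for e f
  proof -
    obtain x y where "ends e = {x,y}" using ends_two[OF gr eE(1)] by blast
    hence "e \<noteq> f" using eE W by auto
    hence "path_image (gam e) \<inter> path_image (gam f) \<subseteq> p ` (ends e \<inter> ends f)"
      using emb_cross[OF emb eE(1) eE(3)] by blast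
    moreover have "ends e \<inter> ends f = {}" using eE W by auto
    ultimately show ?thesis by auto
  qed
  show ?thesis
  proof (rule ccontr)
    assume "Dr W1 E ends p gam \<inter> Dr W2 E ends p gam \<noteq> {}"
    then obtain z where z1: "z \<in> Dr W1 E ends p gam" and z2: "z \<in> Dr W2 E ends p gam" by blast
    from z1 consider (a) a where "a \<in> W1" "z = p a" | (b) e where "e \<in> E" "ends e \<subseteq> W1" "z \<in> path_image (gam e)"
      unfolding Dr_def by blast
    thus False
    proof cases
      case a
      from z2 consider (a') b where "b \<in> W2" "z = p b" | (b') f where "f \<in> E" "ends f \<subseteq> W2" "z \<in> path_image (gam f)"
        unfolding Dr_def by blast
      thus False proof cases
        case a' thus False using a vv by metis
      next
        case b' thus False using a ve by metis
      qed
    next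
      case b
      from z2 consider (a') b where "b \<in> W2" "z = p b" | (b') f where "f \<in> E" "ends f \<subseteq> W2" "z \<in> path_image (gam f)"
        unfolding Dr_def by blast
      thus False proof cases
        case a' thus False using b ve2 by metis
      next
        case b' thus False using b ee by blast
      qed
    qed
  qed
qed

lemma Dr_drawing: "Dr W E ends p gam \<subseteq> drawing V E p gam" if "W \<subseteq> V"
  using that by (auto simp: Dr_def drawing_def)

lemma rot_ends:
  assumes cyc: "is_cycle V E ends vs es" and q: "q < length vs"
  shows "ends (rotate n es ! q) = {rotate n vs ! q, rotate n vs ! (Suc q mod length vs)}"
proof -
  let ?L = "length vs"
  have L: "length es = ?L" "?L > 0" using cyc by (auto simp: is_cycle_def)
  have "rotate n es ! q = es ! ((n + q) mod ?L)" using q L by (simp add: nth_rotate)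
  moreover have "rotate n vs ! q = vs ! ((n + q) mod ?L)" using q by (simp add: nth_rotate)
  moreover have "rotate n vs ! (Suc q mod ?L) = vs ! ((n + Suc q mod ?L) mod ?L)" using L by (simp add: nth_rotate)
  moreover have "(n + Suc q mod ?L) mod ?L = ((n + q) mod ?L + 1) mod ?L"
    by (metis add_Suc_right mod_Suc_eq mod_add_right_eq Suc_eq_plus1)
  moreover have "(n + q) mod ?L < ?L" using L by simp
  ultimately show ?thesis using cyc unfolding is_cycle_def by auto
qed



lemma idx_arith:
  fixes a q1 q2 i k L :: nat
  assumes "i \<le> q1" "q1 < k" "k < L" "q2 < i \<or> (k \<le> q2 \<and> q2 < L)"
    "a = q1 \<or> a = Suc q1" "a = q2 \<or> a = Suc q2 mod L"
  shows "a = i \<or> a = k"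
proof (cases "Suc q2 = L")
  case True
  hence "Suc q2 mod L = 0" by simp
  thus ?thesis using assms by auto
next
  case False
  hence "Suc q2 mod L = Suc q2" using assms by (intro mod_less) auto
  thus ?thesis using assms by auto
qed

lemma cyc_split:
  assumes gr: "graph V E ends" and emb: "plane_embedding V E ends p gam"
    and cyc: "is_cycle V E ends vs es" and order: "cyclic_order4 vs s1 s2 t1 t2"
  shows "\<exists>u d. compact u \<and> compact d \<and> u \<union> d = (\<Union>e\<in>set es. path_image (gam e)) \<and>
           u \<inter> d \<subseteq> {p s1, p t1} \<and> p s2 \<in> u \<and> p t2 \<in> d"
proof -
  obtain n i j k l where o: "i < j" "j < k" "k < l" "l < length vs"
    "rotate n vs ! i = s1" "rotate n vs ! j = s2" "rotate n vs ! k = t1" "rotate n vs ! l = t2"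
    using order unfolding cyclic_order4_def by blast
  define L where "L = length vs"
  define vs' where "vs' = rotate n vs"
  define es' where "es' = rotate n es"
  have lens: "length vs' = L" "length es' = L" using cyc by (auto simp: vs'_def es'_def L_def is_cycle_def)
  have dv: "distinct vs'" "distinct es'" using cyc by (auto simp: vs'_def es'_def is_cycle_def)
  have se: "set es' = set es" "set es \<subseteq> E" using cyc by (auto simp: es'_def is_cycle_def)
  have en: "\<And>q. q < L \<Longrightarrow> ends (es' ! q) = {vs' ! q, vs' ! (Suc q mod L)}"
    using rot_ends[OF cyc] by (simp add: vs'_def es'_def L_def)
  have eE: "\<And>q. q < L \<Longrightarrow> es' ! q \<in> E" using se lens by (metis nth_mem subsetD)
  define f where "f q = path_image (gam (es' ! q))" for q
  have cf: "\<And>q. q < L \<Longrightarrow> compact (f q)"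
    using eE ends_img(2)[OF emb] by (simp add: f_def compact_path_image)
  have pf: "\<And>q. q < L \<Longrightarrow> p ` ends (es' ! q) \<subseteq> f q"
    using eE ends_img(1)[OF emb] by (simp add: f_def)
  define A where "A = {i..<k}"
  define B where "B = {..<i} \<union> {k..<L}"
  define u where "u = (\<Union>q\<in>A. f q)"
  define d where "d = (\<Union>q\<in>B. f q)"
  have kL: "k < L" using o by (simp add: L_def)
  have iL: "i < L" using o kL by simp
  show ?thesis
  proof (intro exI conjI)
    show "compact u" unfolding u_def using cf kL by (intro compact_UN) (auto simp: A_def)
    show "compact d" unfolding d_def
    proof (intro compact_UN)
      show "finite B" by (simp add: B_def)
      fix q assume "q \<in> B" hence "q < L" using iL kL by (auto simp: B_def)
      thus "compact (f q)" by (rule cf)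
    qed
    have "A \<union> B = {..<L}" using kL iL by (auto simp: A_def B_def)
    hence "u \<union> d = (\<Union>q\<in>{..<L}. f q)" unfolding u_def d_def by blast
    also have "\<dots> = (\<Union>e\<in>(\<lambda>q. es' ! q) ` {..<L}. path_image (gam e))"
      unfolding f_def by simp
    also have "(\<lambda>q. es' ! q) ` {..<L} = set es'"
      using lens by (force simp: set_conv_nth)
    finally show "u \<union> d = (\<Union>e\<in>set es. path_image (gam e))" using se by simp
    show "u \<inter> d \<subseteq> {p s1, p t1}"
    proof
      fix z assume "z \<in> u \<inter> d"
      then obtain q1 q2 where q: "q1 \<in> A" "q2 \<in> B" "z \<in> f q1" "z \<in> f q2"
        unfolding u_def d_def by blast
      have qL: "q1 < L" "q2 < L" using q kL iL by (auto simp: A_def B_def)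
      have "q1 \<noteq> q2" using q by (auto simp: A_def B_def)
      hence ne: "es' ! q1 \<noteq> es' ! q2" using dv qL lens by (simp add: nth_eq_iff_index_eq)
      have "z \<in> p ` (ends (es' ! q1) \<inter> ends (es' ! q2))"
        using emb_cross[OF emb eE[OF qL(1)] eE[OF qL(2)] ne] q unfolding f_def by blast
      then obtain v where v: "v \<in> ends (es' ! q1)" "v \<in> ends (es' ! q2)" "z = p v" by blast
      have s1L: "Suc q1 mod L = Suc q1" using q kL by (auto simp: A_def)
      from v(1) en[OF qL(1)] s1L obtain a where a: "a = q1 \<or> a = Suc q1" "v = vs' ! a" by auto
      from v(2) en[OF qL(2)] obtain b where b: "b = q2 \<or> b = Suc q2 mod L" "v = vs' ! b" by auto
      have aL: "a < L" using a(1) q kL by (auto simp: A_def)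
      have bL: "b < L" using b(1) qL by auto
      have "a = b" using a(2) b(2) dv aL bL lens by (simp add: nth_eq_iff_index_eq)
      hence "a = i \<or> a = k"
        using idx_arith[of i q1 k L q2 a] q a(1) b(1) kL by (auto simp: A_def B_def)
      thus "z \<in> {p s1, p t1}" using a(2) v(3) o by (auto simp: vs'_def)
    qed
    have jL: "j < L" "l < L" using o kL by (auto simp: L_def)
    have "s2 \<in> ends (es' ! j)" using en[OF jL(1)] o by (simp add: vs'_def)
    hence "p s2 \<in> f j" using pf[OF jL(1)] by auto
    thus "p s2 \<in> u" unfolding u_def A_def using o by auto
    have "t2 \<in> ends (es' ! l)" using en[OF jL(2)] o by (simp add: vs'_def)
    hence "p t2 \<in> f l" using pf[OF jL(2)] by auto
    thus "p t2 \<in> d" unfolding d_def B_def using o jL by auto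
  qed
qed

lemma noncross:
  assumes gr: "graph V E ends" and emb: "plane_embedding V E ends p gam"
    and face: "F \<in> faces V E p gam"
    and cyc: "is_cycle V E ends vs es" and bdry: "face_boundary_cycle gam F es"
    and order: "cyclic_order4 vs s1 s2 t1 t2"
    and Y: "Y \<subseteq> V" and r1: "reach Y E ends s1 t1" and r2: "reach (V - Y) E ends s2 t2"
  shows False
proof -
  obtain g1 where g1: "path g1" "pathstart g1 = p s1" "pathfinish g1 = p t1"
    "path_image g1 \<subseteq> Dr Y E ends p gam" using reach_path[OF emb gr r1] by blast
  obtain g2 where g2: "path g2" "pathstart g2 = p s2" "pathfinish g2 = p t2"
    "path_image g2 \<subseteq> Dr (V - Y) E ends p gam" using reach_path[OF emb gr r2] by blast
  obtain u d where ud: "compact u" "compact d" "u \<union> d = (\<Union>e\<in>set es. path_image (gam e))"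
    "u \<inter> d \<subseteq> {p s1, p t1}" "p s2 \<in> u" "p t2 \<in> d"
    using cyc_split[OF gr emb cyc order] by blast
  have disj: "Dr Y E ends p gam \<inter> Dr (V - Y) E ends p gam = {}"
    using Dr_disj[OF emb gr] Y by auto
  have Fd: "F \<inter> drawing V E p gam = {}" using face in_components_subset
    unfolding faces_def by blast
  have conF: "connected F" using face in_components_connected unfolding faces_def by blast
  have neF: "F \<noteq> {}" using face in_components_nonempty unfolding faces_def by blast
  have Cd: "u \<union> d \<subseteq> drawing V E p gam" using ud(3) cyc by (auto simp: drawing_def is_cycle_def)
  have D1: "path_image g1 \<subseteq> drawing V E p gam" using g1(4) Dr_drawing[OF Y] by blast
  have D2: "path_image g2 \<subseteq> drawing V E p gam" using g2(4) Dr_drawing[of "V - Y" V] by blast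
  show False
  proof (rule topo_key[of u d g1 F g2])
    show "u \<inter> d \<subseteq> path_image g1" using ud(4) g1
      by (metis insert_subset pathfinish_in_path_image pathstart_in_path_image subset_trans empty_subsetI)
    show "frontier F = u \<union> d" using bdry ud(3) by (simp add: face_boundary_cycle_def)
    show "path_image g1 \<inter> path_image g2 = {}" using g1(4) g2(4) disj by blast
  qed (use ud g1 g2 conF neF Fd Cd D1 D2 in auto)
qed



lemma card1: "x \<noteq> y \<Longrightarrow> (card ({x,y} \<inter> X) = 1) = ((x \<in> X) \<noteq> (y \<in> X))"
  by (cases "x \<in> X"; cases "y \<in> X") auto

lemma card1S: "x \<noteq> y \<Longrightarrow> (card ({x,y} \<inter> X) = Suc 0) = ((x \<in> X) \<noteq> (y \<in> X))"
  using card1 by simp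

lemma reach_in: "reach W E ends u v \<Longrightarrow> v \<in> W"
  by (induction rule: reach.induct) auto

lemma reach_in1: "reach W E ends u v \<Longrightarrow> u \<in> W"
  by (induction rule: reach.induct) auto

lemma compl_G:
  assumes gr: "graph V E ends" and X: "X \<subseteq> V"
  shows "delta_G E ends (V - X) = delta_G E ends X"
proof -
  { fix e assume e: "e \<in> E"
    then obtain x y where xy: "x \<noteq> y" "ends e = {x,y}" using ends_two[OF gr] by blast
    have "x \<in> V" "y \<in> V" using gr e xy unfolding graph_def by auto
    hence "(card (ends e \<inter> (V - X)) = 1) = (card (ends e \<inter> X) = 1)"
      using xy by (simp add: card1 card1S) }
  thus ?thesis unfolding delta_G_def by auto
qed

lemma compl_H:
  assumes P: "\<forall>h\<in>P. \<exists>u v. u \<in> V \<and> v \<in> V \<and> u \<noteq> v \<and> h = {u, v}" and X: "X \<subseteq> V"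
  shows "delta_H P (V - X) = delta_H P X"
proof -
  { fix h assume h: "h \<in> P"
    then obtain x y where xy: "x \<in> V" "y \<in> V" "x \<noteq> y" "h = {x,y}" using P by blast
    hence "(card (h \<inter> (V - X)) = 1) = (card (h \<inter> X) = 1)"
      by (simp add: card1 card1S) }
  thus ?thesis unfolding delta_H_def by auto
qed

lemma finite_H:
  assumes inst: "multiflow_instance V E ends H r c" shows "finite H"
proof -
  have Hp: "\<forall>h\<in>H. \<exists>u v. u \<in> V \<and> v \<in> V \<and> u \<noteq> v \<and> h = {u, v}"
    using inst[unfolded multiflow_instance_def, THEN conjunct2, THEN conjunct1] .
  have "H \<subseteq> Pow V"
  proof
    fix h assume "h \<in> H"
    then obtain u v where "u \<in> V" "v \<in> V" "h = {u,v}" using Hp by blast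
    thus "h \<in> Pow V" by auto
  qed
  moreover have "finite V"
    using inst[unfolded multiflow_instance_def, THEN conjunct1] by (simp add: graph_def)
  ultimately show ?thesis using finite_subset[of H "Pow V"] by simp
qed

lemma split_cut:
  assumes inst: "multiflow_instance V E ends H r c" and cut: "cut_condition V E ends H r c"
    and Y: "Y \<subseteq> V" and ab: "a \<in> Y" "b \<in> Y" "{a,b} \<in> H" and nr: "\<not> reach Y E ends a b"
  shows "(\<Sum>e\<in>delta_G E ends Y. c e) \<ge> (\<Sum>h\<in>delta_H H Y. r h) + 2 * r {a,b}"
proof -
  have gr: "graph V E ends" using inst by (simp add: multiflow_instance_def)
  have fE: "finite E" using gr by (simp add: graph_def)
  have fH: "finite H" using finite_H[OF inst] .
  have rpos: "\<And>h. h \<in> H \<Longrightarrow> r h > 0" using inst by (simp add: multiflow_instance_def)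
  have Hp: "\<forall>h\<in>H. \<exists>u v. u \<in> V \<and> v \<in> V \<and> u \<noteq> v \<and> h = {u, v}" using inst by (simp add: multiflow_instance_def)
  define A where "A = {v. reach Y E ends a v}"
  define B where "B = Y - A"
  have AY: "A \<subseteq> Y" using reach_in by (auto simp: A_def)
  have aA: "a \<in> A" using ab by (auto simp: A_def intro: reach.refl)
  have bB: "b \<in> B" using ab nr by (auto simp: A_def B_def)
  have clos: "\<And>e x y. e \<in> E \<Longrightarrow> ends e = {x,y} \<Longrightarrow> x \<in> A \<Longrightarrow> y \<in> Y \<Longrightarrow> y \<in> A"
  proof -
    fix e x y assume "e \<in> E" "ends e = {x,y}" "x \<in> A" "y \<in> Y"
    moreover have "x \<in> Y" using \<open>x \<in> A\<close> AY by auto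
    ultimately show "y \<in> A" unfolding A_def by (auto intro: reach.step)
  qed
  have dG: "delta_G E ends Y = delta_G E ends A \<union> delta_G E ends B"
    and dGd: "delta_G E ends A \<inter> delta_G E ends B = {}"
  proof -
    { fix e assume e: "e \<in> E"
      then obtain x y where xy: "x \<noteq> y" "ends e = {x,y}" using ends_two[OF gr] by blast
      have c1: "x \<in> A \<Longrightarrow> y \<in> Y \<Longrightarrow> y \<in> A" using clos[OF e xy(2)] by blast
      have c2: "y \<in> A \<Longrightarrow> x \<in> Y \<Longrightarrow> x \<in> A" using clos[OF e, of y x] xy(2) by (simp add: insert_commute)
      have "(card (ends e \<inter> Y) = 1) = (card (ends e \<inter> A) = 1 \<or> card (ends e \<inter> B) = 1)"
        "\<not> (card (ends e \<inter> A) = 1 \<and> card (ends e \<inter> B) = 1)"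
        using xy c1 c2 AY by (auto simp: card1 card1S B_def) }
    thus "delta_G E ends Y = delta_G E ends A \<union> delta_G E ends B"
      "delta_G E ends A \<inter> delta_G E ends B = {}" unfolding delta_G_def by blast+
  qed
  have capY: "(\<Sum>e\<in>delta_G E ends Y. c e) = (\<Sum>e\<in>delta_G E ends A. c e) + (\<Sum>e\<in>delta_G E ends B. c e)"
    unfolding dG using fE dGd by (intro sum.union_disjoint) (auto simp: delta_G_def)
  have cA: "(\<Sum>e\<in>delta_G E ends A. c e) \<ge> (\<Sum>h\<in>delta_H H A. r h)"
    using cut AY Y unfolding cut_condition_def by auto
  have cB: "(\<Sum>e\<in>delta_G E ends B. c e) \<ge> (\<Sum>h\<in>delta_H H B. r h)"
  proof -
    have "B \<subseteq> V" using Y by (auto simp: B_def)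
    thus ?thesis using cut unfolding cut_condition_def by blast
  qed
  have fd: "finite (delta_H H X)" for X using fH by (simp add: delta_H_def)
  have dHsub: "delta_H H Y \<subseteq> delta_H H A \<union> delta_H H B"
  proof
    fix h assume h: "h \<in> delta_H H Y"
    then obtain x y where xy: "x \<noteq> y" "h = {x,y}" "h \<in> H" using Hp unfolding delta_H_def by blast
    thus "h \<in> delta_H H A \<union> delta_H H B" using h AY by (auto simp: delta_H_def card1 card1S B_def)
  qed
  have abne: "a \<noteq> b" using aA bB by (auto simp: B_def)
  have abA: "{a,b} \<in> delta_H H A" using ab aA bB abne by (auto simp: delta_H_def card1 card1S B_def)
  have abB: "{a,b} \<in> delta_H H B" using ab aA bB abne by (auto simp: delta_H_def card1 card1S B_def)
  have abY: "{a,b} \<notin> delta_H H Y" using ab abne by (auto simp: delta_H_def card1 card1S)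
  have nn: "\<And>h. h \<in> H \<Longrightarrow> 0 \<le> r h" using rpos less_imp_le by blast
  have "(\<Sum>h\<in>delta_H H A. r h) + (\<Sum>h\<in>delta_H H B. r h)
      = (\<Sum>h\<in>delta_H H A \<union> delta_H H B. r h) + (\<Sum>h\<in>delta_H H A \<inter> delta_H H B. r h)"
    using fd by (simp add: sum.union_inter)
  moreover have "(\<Sum>h\<in>insert {a,b} (delta_H H Y). r h) \<le> (\<Sum>h\<in>delta_H H A \<union> delta_H H B. r h)"
    using dHsub abA fd nn by (intro sum_mono2) (auto simp: delta_H_def)
  moreover have "(\<Sum>h\<in>insert {a,b} (delta_H H Y). r h) = r {a,b} + (\<Sum>h\<in>delta_H H Y. r h)"
    using abY fd by simp
  moreover have "(\<Sum>h\<in>{{a,b}}. r h) \<le> (\<Sum>h\<in>delta_H H A \<inter> delta_H H B. r h)"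
    using abA abB fd nn by (intro sum_mono2) (auto simp: delta_H_def)
  ultimately show ?thesis using capY cA cB by simp
qed



theorem lemma1:
  fixes V :: "'a set" and E :: "'e set" and ends :: "'e \<Rightarrow> 'a set"
    and p :: "'a \<Rightarrow> complex" and gam :: "'e \<Rightarrow> real \<Rightarrow> complex"
    and H :: "'a set set" and r :: "'a set \<Rightarrow> real" and c :: "'e \<Rightarrow> real"
    and s1 t1 s2 t2 :: 'a and F :: "complex set" and vs :: "'a list" and es :: "'e list"
  assumes inst: "multiflow_instance V E ends H r c"
    and two_conn: "two_connected V E ends"
    and emb: "plane_embedding V E ends p gam"
    and face: "F \<in> faces V E p gam"
    and cyc: "is_cycle V E ends vs es"
    and bdry: "face_boundary_cycle gam F es"
    and d1: "{s1, t1} \<in> H" and d2: "{s2, t2} \<in> H"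
    and dist: "distinct [s1, s2, t1, t2]"
    and order: "cyclic_order4 vs s1 s2 t1 t2"
    and cut: "cut_condition V E ends H r c"
  shows "cut_condition V E ends (pos_pairs V (swap_req H r s1 t1 s2 t2)) (swap_req H r s1 t1 s2 t2) c"
proof -
  have gr: "graph V E ends" using inst by (simp add: multiflow_instance_def)
  have fE: "finite E" using gr by (simp add: graph_def)
  have fH: "finite H" using finite_H[OF inst] .
  have rpos: "\<And>h. h \<in> H \<Longrightarrow> r h > 0" using inst by (simp add: multiflow_instance_def)
  have Hp: "\<forall>h\<in>H. \<exists>u v. u \<in> V \<and> v \<in> V \<and> u \<noteq> v \<and> h = {u, v}"
    using inst by (simp add: multiflow_instance_def)
  have inV: "s1 \<in> V" "t1 \<in> V" "s2 \<in> V" "t2 \<in> V"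
    using Hp d1 d2 by (auto simp: doubleton_eq_iff)
  define r' where "r' = swap_req H r s1 t1 s2 t2"
  define m where "m = min (r {s1,t1}) (r {s2,t2})"
  define k1 where "k1 = {s1,t1}"
  define k2 where "k2 = {s2,t2}"
  define k3 where "k3 = {s1,s2}"
  define k4 where "k4 = {t1,t2}"
  have kd: "k1 \<noteq> k2" "k1 \<noteq> k3" "k1 \<noteq> k4" "k2 \<noteq> k3" "k2 \<noteq> k4" "k3 \<noteq> k4"
    using dist by (auto simp: k1_def k2_def k3_def k4_def doubleton_eq_iff)
  define w where "w h = (if h = k1 then -1 else if h = k2 then -1 else if h = k3 then 1
                          else if h = k4 then (1::real) else 0)" for h
  have r'w: "r' h = ext_req H r h + m * w h" for h
    by (simp add: r'_def swap_req_def Let_def m_def w_def k1_def k2_def k3_def k4_def)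
  have m0: "0 \<le> m" "m \<le> r k1" "m \<le> r k2"
    using rpos[OF d1] rpos[OF d2] by (auto simp: m_def k1_def k2_def)
  have extH: "\<And>h. h \<in> H \<Longrightarrow> ext_req H r h = r h" by (simp add: ext_req_def)
  have extN: "\<And>h. h \<notin> H \<Longrightarrow> ext_req H r h = 0" by (simp add: ext_req_def)
  have extnn: "\<And>h. 0 \<le> ext_req H r h" using rpos by (simp add: ext_req_def less_imp_le)
  have k12H: "k1 \<in> H" "k2 \<in> H" using d1 d2 by (auto simp: k1_def k2_def)
  have r'nn: "0 \<le> r' h" for h
  proof -
    have "h = k1 \<or> h = k2 \<or> (h \<noteq> k1 \<and> h \<noteq> k2)" by blast
    thus ?thesis
    proof (elim disjE)
      assume "h = k1" thus ?thesis using r'w[of h] kd extH[OF k12H(1)] m0 by (simp add: w_def)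
    next
      assume "h = k2" thus ?thesis using r'w[of h] kd extH[OF k12H(2)] m0 by (simp add: w_def)
    next
      assume "h \<noteq> k1 \<and> h \<noteq> k2" thus ?thesis using r'w[of h] extnn[of h] m0 by (simp add: w_def)
    qed
  qed
  define K where "K = {k1,k2,k3,k4}"
  define D where "D = H \<union> K"
  have fD: "finite D" using fH by (simp add: D_def K_def)
  have Dp: "\<forall>h\<in>D. \<exists>u v. u \<in> V \<and> v \<in> V \<and> u \<noteq> v \<and> h = {u, v}"
    using Hp inV dist by (auto simp: D_def K_def k1_def k2_def k3_def k4_def)
  define H' where "H' = pos_pairs V r'"
  have H'D: "H' \<subseteq> D"
  proof
    fix h assume "h \<in> H'"
    hence pos: "r' h > 0" by (simp add: H'_def pos_pairs_def)
    show "h \<in> D"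
    proof (cases "h \<in> K")
      case True thus ?thesis by (simp add: D_def)
    next
      case False
      hence "r' h = ext_req H r h" using r'w[of h] by (simp add: w_def K_def)
      hence "h \<in> H" using pos extN by fastforce
      thus ?thesis by (simp add: D_def)
    qed
  qed
  have H'p: "\<forall>h\<in>H'. \<exists>u v. u \<in> V \<and> v \<in> V \<and> u \<noteq> v \<and> h = {u, v}"
    using H'D Dp by blast
  have sep: "(\<Sum>e\<in>delta_G E ends Y. c e) \<ge> (\<Sum>h\<in>delta_H H Y. r h) + 2 * m"
    if Y: "Y \<subseteq> V" "s1 \<in> Y" "t1 \<in> Y" "s2 \<notin> Y" "t2 \<notin> Y" for Y
  proof -
    have "\<not> reach Y E ends s1 t1 \<or> \<not> reach (V - Y) E ends s2 t2"
      using noncross[OF gr emb face cyc bdry order Y(1)] by blast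
    thus ?thesis
    proof
      assume "\<not> reach Y E ends s1 t1"
      from split_cut[OF inst cut Y(1) Y(2) Y(3) d1 this] m0 show ?thesis by (simp add: k1_def)
    next
      assume "\<not> reach (V - Y) E ends s2 t2"
      from split_cut[OF inst cut _ _ _ d2 this] Y inV
      have "(\<Sum>e\<in>delta_G E ends (V - Y). c e) \<ge> (\<Sum>h\<in>delta_H H (V - Y). r h) + 2 * r {s2,t2}"
        by auto
      thus ?thesis using compl_G[OF gr Y(1)] compl_H[OF Hp Y(1)] m0 by (simp add: k2_def)
    qed
  qed
  show ?thesis unfolding cut_condition_def r'_def[symmetric] H'_def[symmetric]
  proof (intro allI impI)
    fix X assume X: "X \<subseteq> V"
    let ?cap = "\<Sum>e\<in>delta_G E ends X. c e"
    let ?dem = "\<Sum>h\<in>delta_H H X. r h"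
    have capdem: "?cap \<ge> ?dem" using cut X by (simp add: cut_condition_def)
    have fdD: "finite (delta_H D X)" using fD by (simp add: delta_H_def)
    have S1: "(\<Sum>h\<in>delta_H H' X. r' h) = (\<Sum>h\<in>delta_H D X. r' h)"
    proof (rule sum.mono_neutral_left[OF fdD])
      show "delta_H H' X \<subseteq> delta_H D X" using H'D by (auto simp: delta_H_def)
      show "\<forall>i\<in>delta_H D X - delta_H H' X. r' i = 0"
      proof
        fix i assume i: "i \<in> delta_H D X - delta_H H' X"
        hence "i \<in> D" "i \<notin> H'" by (auto simp: delta_H_def)
        hence "\<not> r' i > 0" using Dp by (auto simp: H'_def pos_pairs_def)
        thus "r' i = 0" using r'nn[of i] by simp
      qed
    qed
    have S2: "(\<Sum>h\<in>delta_H D X. r' h) = (\<Sum>h\<in>delta_H D X. ext_req H r h) + m * (\<Sum>h\<in>delta_H D X. w h)"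
      by (simp add: r'w sum.distrib sum_distrib_left)
    have S3: "(\<Sum>h\<in>delta_H D X. ext_req H r h) = ?dem"
    proof -
      have "(\<Sum>h\<in>delta_H D X. ext_req H r h) = (\<Sum>h\<in>delta_H H X. ext_req H r h)"
        by (rule sum.mono_neutral_right[OF fdD]) (auto simp: delta_H_def D_def ext_req_def)
      also have "\<dots> = ?dem" by (rule sum.cong) (auto simp: delta_H_def extH)
      finally show ?thesis .
    qed
    let ?\<chi> = "\<lambda>h. card (h \<inter> X) = 1"
    have S4: "(\<Sum>h\<in>delta_H D X. w h) = (\<Sum>h\<in>K. if ?\<chi> h then w h else 0)"
    proof -
      have "(\<Sum>h\<in>delta_H D X. w h) = (\<Sum>h\<in>delta_H D X \<inter> K. w h)"
        by (rule sum.mono_neutral_right[OF fdD]) (auto simp: w_def K_def)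
      also have "delta_H D X \<inter> K = {h\<in>K. ?\<chi> h}" by (auto simp: delta_H_def D_def)
      also have "(\<Sum>h\<in>{h\<in>K. ?\<chi> h}. w h) = (\<Sum>h\<in>K. if ?\<chi> h then w h else 0)"
        by (rule sum.inter_filter) (simp add: K_def)
      finally show ?thesis .
    qed
    have S5: "(\<Sum>h\<in>K. if ?\<chi> h then w h else 0) =
        (if ?\<chi> k3 then 1 else 0) + (if ?\<chi> k4 then 1 else 0) - (if ?\<chi> k1 then 1 else 0) - (if ?\<chi> k2 then 1 else 0)"
      using kd by (simp add: K_def w_def)
    have c1: "?\<chi> k1 = ((s1 \<in> X) \<noteq> (t1 \<in> X))" using dist by (simp add: k1_def card1S)
    have c2: "?\<chi> k2 = ((s2 \<in> X) \<noteq> (t2 \<in> X))" using dist by (simp add: k2_def card1S)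
    have c3: "?\<chi> k3 = ((s1 \<in> X) \<noteq> (s2 \<in> X))" using dist by (simp add: k3_def card1S)
    have c4: "?\<chi> k4 = ((t1 \<in> X) \<noteq> (t2 \<in> X))" using dist by (simp add: k4_def card1S)
    define \<alpha> where "\<alpha> = (if ?\<chi> k3 then 1 else 0) + (if ?\<chi> k4 then 1 else 0) - (if ?\<chi> k1 then 1 else 0) - (if ?\<chi> k2 then (1::real) else 0)"
    have new: "(\<Sum>h\<in>delta_H H' X. r' h) = ?dem + m * \<alpha>"
      using S1 S2 S3 S4 S5 by (simp add: \<alpha>_def)
    have cases: "\<alpha> \<le> 0 \<or> (\<alpha> = 2 \<and> s1 \<in> X \<and> t1 \<in> X \<and> s2 \<notin> X \<and> t2 \<notin> X)
        \<or> (\<alpha> = 2 \<and> s1 \<notin> X \<and> t1 \<notin> X \<and> s2 \<in> X \<and> t2 \<in> X)"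
      unfolding \<alpha>_def c1 c2 c3 c4
      by (cases "s1 \<in> X"; cases "t1 \<in> X"; cases "s2 \<in> X"; cases "t2 \<in> X") auto
    show "(\<Sum>h\<in>delta_H H' X. r' h) \<le> ?cap"
    proof -
      consider "\<alpha> \<le> 0" | "\<alpha> = 2" "s1 \<in> X" "t1 \<in> X" "s2 \<notin> X" "t2 \<notin> X"
        | "\<alpha> = 2" "s1 \<notin> X" "t1 \<notin> X" "s2 \<in> X" "t2 \<in> X" using cases by blast
      thus ?thesis
      proof cases
        case 1
        have "m * \<alpha> \<le> 0" using 1 m0 by (simp add: mult_nonneg_nonpos)
        thus ?thesis using new capdem by simp
      next
        case 2
        thus ?thesis using new sep[OF X] by simp
      next
        case 3
        have "V - X \<subseteq> V" by auto
        from sep[OF this] 3 inV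
        have "(\<Sum>e\<in>delta_G E ends (V - X). c e) \<ge> (\<Sum>h\<in>delta_H H (V - X). r h) + 2 * m" by auto
        thus ?thesis using new 3 compl_G[OF gr X] compl_H[OF Hp X] by simp
      qed
    qed
  qed
qed


end
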